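(* For every admissible $(\alpha,s)$, the measure $\mu^{\alpha}_{s,2}$ is a free compound Poisson distribution: there exist $\eta,M>0$ such that $R_{\mu^\alpha_{s,2}}(1/z)\cdot$ — equivalently, $\phi_{\mu^{\alpha}_{s,2}}(z)=z^2G_{a^{\alpha}_{s/4}}(z)-z$ for $z\in\Gamma_{\eta,M}$, i.e. $R_{\mu^\alpha_{s,2}}=\psi_{a^\alpha_{s/4}}$ — with rate $\lambda=1$ and jump distribution $a^{\alpha}_{s/4}$. In particular $\mu^{\alpha}_{s,2}$ is $\boxplus$-infinitely divisible and its free Lévy measure is the monotone $\alpha$-stable law $a^{\alpha}_{s/4}$.
   Context: Powers: for $w\in\mathbb{C}\setminus[0,\infty)$ and $p\in\{\alpha,1/\alpha\}$, $w^p:=e^{p\log_{(1)}w}$ with $\operatorname{Im}\log_{(1)}w\in(0,2\pi)$; $w^{1/r}$ is the principal power on $\mathbb{C}\setminus(-\infty,0]$; $(-1)^{\alpha-1}:=e^{i(\alpha-1)\pi}$. A pair $(\alpha,s)$ ($0<\alpha\le2$, $\arg s\in(-\pi,\pi]$) is admissible if either $0<\alpha\le1$ and $(1-\alpha)\pi\le\arg s\le\pi$, or $1<\alpha\le2$ and $0\le\arg s\le(2-\alpha)\pi$. For $r\ge1$ and admissible $(\alpha,s)$, $\mu^\alpha_{s,r}$ is the probability measure with Cauchy transform $G^{\alpha}_{s,r}(z)=-r^{1/\alpha}\big(\frac{1-(1-s(-1/z)^{\alpha})^{1/r}}{s}\big)^{1/\alpha}$ on $\mathbb{C}_+$. The monotone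 $\alpha$-stable law $a^\alpha_s$ is the probability measure with $F_{a^\alpha_s}(z)=(z^\alpha+(-1)^{\alpha-1}s)^{1/\alpha}$. For a probability measure $\mu$: $G_\mu(z)=\int\frac{\mu(dx)}{z-x}$, $F_\mu=1/G_\mu$, Voiculescu transform $\phi_\mu(z)=F_\mu^{-1}(z)-z$ on a truncated cone $\Gamma_{\eta,M}=\{\operatorname{Im}z>M,\operatorname{Im}z>\eta|\operatorname{Re}z|\}$, $R_\mu(z)=z\phi_\mu(1/z)$, $\psi_\mu(z)=\int\frac{zx}{1-zx}\mu(dx)$. $\mu$ is $\boxplus$-infinitely divisible iff $R_\mu(z)=cz+az^2+\int_{\mathbb{R}}\big(\frac{1}{1-xz}-1-xz\mathbf 1_{\{|x|\le1\}}\big)\nu(dx)$ with $c\in\mathbb{R}$, $a\ge0$, $\nu$ a measure with $\nu(\{0\})=0$, $\int\min(1,x^2)\nu(dx)<\infty$; $\nu$ is the (free) Lévy measure. $\mu$ is free compound Poisson if $R_\mu=\lambda\psi_\nu$ for some $\lambda\ge0$ and probability measure $\nu$; then $\lambda\nu$ is its Lévy measure (away from $0$). *)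

theory Defs
  imports "HOL-Probability.Probability"
begin

(* log_(1): branch of the logarithm on C \ [0,oo) with imaginary part in (0, 2 pi) *)
definition log1 :: "complex \<Rightarrow> complex" where
  "log1 w = (if Im w < 0 then Ln w + 2 * pi * \<i> else Ln w)"

definition pow1 :: "complex \<Rightarrow> real \<Rightarrow> complex" where
  "pow1 w p = exp (complex_of_real p * log1 w)"

definition ppow :: "complex \<Rightarrow> real \<Rightarrow> complex" where
  "ppow w p = exp (complex_of_real p * Ln w)"

definition admissible :: "real \<Rightarrow> complex \<Rightarrow> bool" where
  "admissible \<alpha> s \<longleftrightarrow> s \<noteq> 0 \<and>
     ((0 < \<alpha> \<and> \<alpha> \<le> 1 \<and> (1 - \<alpha>) * pi \<le> Arg s \<and> Arg s \<le> pi) \<or>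
      (1 < \<alpha> \<and> \<alpha> \<le> 2 \<and> 0 \<le> Arg s \<and> Arg s \<le> (2 - \<alpha>) * pi))"

definition cauchy :: "real measure \<Rightarrow> complex \<Rightarrow> complex" where
  "cauchy \<mu> z = (\<integral>x. 1 / (z - complex_of_real x) \<partial>\<mu>)"

definition Ftr :: "real measure \<Rightarrow> complex \<Rightarrow> complex" where
  "Ftr \<mu> z = 1 / cauchy \<mu> z"

definition Gasr :: "real \<Rightarrow> complex \<Rightarrow> real \<Rightarrow> complex \<Rightarrow> complex" where
  "Gasr \<alpha> s r z = - complex_of_real (r powr (1 / \<alpha>)) *
      pow1 ((1 - ppow (1 - s * pow1 (- 1 / z) \<alpha>) (1 / r)) / s) (1 / \<alpha>)"

definition Fstable :: "real \<Rightarrow> complex \<Rightarrow> complex \<Rightarrow> complex" where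
  "Fstable \<alpha> s z = pow1 (pow1 z \<alpha> + exp (\<i> * complex_of_real ((\<alpha> - 1) * pi)) * s) (1 / \<alpha>)"

definition cone :: "real \<Rightarrow> real \<Rightarrow> complex set" where
  "cone \<eta> M = {z. Im z > M \<and> Im z > \<eta> * \<bar>Re z\<bar>}"

end

theory Submission
  imports Defs
begin


lemma norm_exp_m1:
  fixes z :: complex
  assumes "norm z \<le> 1 / 2"
  shows   "norm (exp z - 1) \<le> 3 / 2 * norm z"
proof -
  have *: "norm (exp z - 1 - z) \<le> norm z / 2"
  proof (cases "z = 0")
    case False
    have sums: "(\<lambda>k. z ^ (k + 2) /\<^sub>R fact (k + 2)) sums (exp z - (\<Sum>k<2. z ^ k /\<^sub>R fact k))"
      by (intro sums_split_initial_segment exp_converges)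
    have "summable (\<lambda>k. norm z ^ (k + 2) /\<^sub>R fact (k + 2))"
      using summable_norm_exp[of z]
      by (intro summable_norm summable_ignore_initial_segment)
         (auto simp: norm_power norm_divide divide_simps)
    also have "?this \<longleftrightarrow> summable (\<lambda>k. norm z ^ 2 * (norm z ^ k / fact (k +2)))"
      by (simp add: power_add mult_ac divide_simps power2_eq_square del: of_nat_Suc of_nat_add)
    also have "\<dots> \<longleftrightarrow> summable (\<lambda>k. norm z ^ k / fact (k + 2))"
      by (subst summable_cmult_iff) (use \<open>z \<noteq> 0\<close> in auto)
    finally have summable: "summable (\<lambda>k. norm z ^ k / fact (k + 2))" .
    have "exp z - 1 - z = (\<Sum>k. z ^ (k + 2) / fact (k + 2))"
      using sums by (simp add: sums_iff scaleR_conv_of_real divide_simps eval_nat_numeral)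
    also have "norm \<dots> \<le> (\<Sum>k. norm (z ^ (k + 2) / fact (k + 2)))"
      using summable_norm_exp[of z]
      by (intro summable_norm summable_ignore_initial_segment)
         (auto simp: norm_power norm_divide divide_simps)
    also have "\<dots> = (\<Sum>k. norm z ^ 2 * (norm z ^ k / fact (k + 2)))"
      by (simp add: power_add norm_power norm_divide mult_ac norm_mult power2_eq_square del: of_nat_Suc)
    also have "\<dots> = norm z ^ 2 * (\<Sum>k. norm z ^ k / fact (k + 2))"
      using summable by (rule suminf_mult)
    also have "\<dots> \<le> norm z ^ 2 * (1 / (1 - norm z) / 2)"
    proof (intro mult_left_mono, rule sums_le)
      show "(\<lambda>k. norm z ^ k / fact (k + 2)) sums (\<Sum>k. norm z ^ k / fact (k + 2))"
        using summable by blast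
      show "(\<lambda>k. norm z ^ k / 2) sums (1 / (1 - norm z) / 2)"
        using assms by (intro geometric_sums sums_divide) auto
    next
      fix k :: nat
      have "norm z ^ k / fact (k + 2) \<le> norm z ^ k / fact 2"
        by (intro divide_left_mono fact_mono) auto
      thus "norm z ^ k / fact (k + 2) \<le> norm z ^ k / 2"
        by simp
    qed (auto simp: divide_simps)
    also have "\<dots> = norm z * (norm z / (1 - norm z)) / 2"
      by (simp add: power2_eq_square)
    also have "\<dots> \<le> norm z * ((1 / 2) / (1 - (1 / 2))) / 2"
      using assms by (intro mult_mono frac_le diff_mono) auto
    also have "\<dots> = norm z / 2"
      by simp
    finally show "norm (exp z - 1 - z) \<le> norm z / 2" .
  qed auto
  have "norm (exp z - 1) \<le> norm z + norm (exp z - 1 - z)"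
    by (rule norm_triangle_sub)
  with * show "norm (exp z - 1) \<le> 3 / 2 * norm z"
    by simp
qed




lemma log1_eq:
  assumes e: "exp L = X" and l: "0 \<le> Im L" "Im L < 2 * pi"
  shows "log1 X = L"
proof (cases "Im L \<le> pi")
  case True
  have m: "- pi < Im L" using l(1) pi_gt_zero by linarith
  have "Ln X = L" using Ln_exp[OF m True] e by simp
  moreover have "sin (Im L) \<ge> 0" using l(1) True by (rule sin_ge_zero)
  then have "Im X \<ge> 0" using e[symmetric] by (simp add: Im_exp)
  ultimately show ?thesis by (simp add: log1_def)
next
  case False
  define L' where "L' = L - 2 * pi * \<i>"
  have e': "exp L' = X" using e by (simp add: L'_def exp_diff)
  have m1: "- pi < Im L'" and m2: "Im L' \<le> pi" using l False by (auto simp: L'_def)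
  have "Ln X = L'" using Ln_exp[OF m1 m2] e' by simp
  moreover have "sin (Im L) < 0" using False l(2) by (intro sin_lt_zero) auto
  then have "Im X < 0" using e[symmetric] by (simp add: Im_exp mult_pos_neg)
  ultimately show ?thesis by (simp add: log1_def L'_def)
qed

lemma log1_upper: "Im z \<ge> 0 \<Longrightarrow> log1 z = Ln z"
  by (simp add: log1_def)


lemma cone_angle:
  assumes "Im w > \<bar>Re w\<bar>"
  shows "pi/4 < Im (Ln w) \<and> Im (Ln w) < 3*pi/4"
proof -
  have w0: "w \<noteq> 0" using assms by auto
  define t where "t = Im (Ln w)"
  have t: "0 < t" "t < pi" using Im_Ln_pos_lt_imp[of w] assms by (auto simp: t_def)
  have ew: "exp (Ln w) = w" using w0 by simp
  have en: "exp (Re (Ln w)) = norm w" using w0 by simp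
  have re: "Re w = norm w * cos t"
    using arg_cong[OF ew, of Re] en by (simp add: Re_exp t_def)
  have im: "Im w = norm w * sin t"
    using arg_cong[OF ew, of Im] en by (simp add: Im_exp t_def)
  have nw: "norm w > 0" using w0 by simp
  have sc: "sin t > \<bar>cos t\<bar>"
  proof -
    have "norm w * \<bar>cos t\<bar> < norm w * sin t" using assms re im nw by (simp add: abs_mult)
    then show ?thesis using nw by simp
  qed
  have p: "pi > 0" by simp
  have c1: "t > pi/4"
  proof (rule ccontr)
    assume "\<not> t > pi/4"
    then have a: "t \<le> pi/4" by simp
    have "sin t \<le> sin (pi/4)" by (rule sin_monotone_2pi_le) (use a t p in linarith)+
    moreover have "cos (pi/4) \<le> cos t" by (rule cos_monotone_0_pi_le) (use a t p in linarith)+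
    ultimately show False using sc unfolding sin_45 cos_45 by linarith
  qed
  have c2: "t < 3*pi/4"
  proof (rule ccontr)
    assume "\<not> t < 3*pi/4"
    then have a: "t \<ge> 3*pi/4" by simp
    have "sin (pi - t) \<le> sin (pi/4)" by (rule sin_monotone_2pi_le) (use a t p in linarith)+
    then have s1: "sin t \<le> sqrt 2 / 2" by (simp add: sin_45)
    have "cos t \<le> cos (3*pi/4)" by (rule cos_monotone_0_pi_le) (use a t p in linarith)+
    moreover have "cos (3*pi/4) = - (sqrt 2 / 2)"
    proof -
      have e: "3*pi/4 = pi - pi/4" by linarith
      have "cos (3*pi/4) = cos (pi - pi/4)" by (subst e) (rule refl)
      also have "\<dots> = - cos (pi/4)" by (rule cos_pi_minus)
      finally show ?thesis by (simp add: cos_45)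
    qed
    ultimately show False using sc s1 by linarith
  qed
  show ?thesis using c1 c2 by (simp add: t_def)
qed




lemma sqrt_branch:
  assumes y: "y \<noteq> 0"
  shows "ppow y (1/2) ^ 2 = y" "Re (ppow y (1/2)) \<ge> 0"
proof -
  define h where "h = complex_of_real (1/2) * Ln y"
  have "ppow y (1/2) ^ 2 = exp h * exp h" by (simp add: ppow_def h_def power2_eq_square)
  also have "\<dots> = exp (h + h)" by (rule exp_add[symmetric])
  also have "h + h = Ln y" unfolding h_def by (simp add: field_simps)
  also have "exp (Ln y) = y" using y by (rule exp_Ln)
  finally show "ppow y (1/2) ^ 2 = y" .
  have "- pi < Im (Ln y)" "Im (Ln y) \<le> pi" using y mpi_less_Im_Ln Im_Ln_le_pi by auto
  then have c: "cos (Im (Ln y) / 2) \<ge> 0" by (intro cos_ge_zero) auto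
  have "Re (ppow y (1/2)) = exp (Re h) * cos (Im (Ln y) / 2)"
    by (simp add: ppow_def h_def Re_exp)
  then show "Re (ppow y (1/2)) \<ge> 0" using c by simp
qed




lemma sq_root_eq:
  fixes R r :: complex
  assumes "R^2 = r^2" "Re R \<ge> 0" "Re r > 0"
  shows "R = r"
proof -
  have "(R - r) * (R + r) = 0" using assms(1) by (simp add: algebra_simps power2_eq_square)
  moreover have "R + r \<noteq> 0" using assms(2,3) by (metis add_pos_nonneg less_irrefl plus_complex.sel(1) zero_complex.sel(1) add.commute)
  ultimately show ?thesis by simp
qed

lemma exp_ipi_minus: "exp (\<i> * of_real pi - L) = - 1 / exp L"
  by (simp add: exp_diff)

lemma fwd:
  fixes \<alpha> :: real and s z :: complex
  assumes a: "0 < \<alpha>" "\<alpha> \<le> 2" and s0: "s \<noteq> 0"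
    and zc: "Im z > 3 * \<bar>Re z\<bar>"
    and kap: "norm s / exp (\<alpha> * ln (norm z)) \<le> \<alpha> / 80"
  shows "Fstable \<alpha> (s/4) z \<noteq> 0"
    and "Im (z^2 / Fstable \<alpha> (s/4) z) > \<bar>Re (z^2 / Fstable \<alpha> (s/4) z)\<bar>"
    and "Im (z^2 / Fstable \<alpha> (s/4) z) \<ge> Im z * (79/80)"
    and "Gasr \<alpha> s 2 (z^2 / Fstable \<alpha> (s/4) z) = 1 / z"
proof -
  have imz: "Im z > 0" using zc by linarith
  have z0: "z \<noteq> 0" using imz by auto
  have nz: "norm z > 0" using z0 by simp
  define Lz where "Lz = Ln z"
  define K where "K = Im Lz"
  have K: "pi/4 < K" "K < 3*pi/4" using cone_angle[of z] zc by (auto simp: K_def Lz_def)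
  have eLz: "exp Lz = z" using z0 by (simp add: Lz_def)
  have ReLz: "Re Lz = ln (norm z)" using z0 by (simp add: Lz_def)
  define E where "E = exp (complex_of_real \<alpha> * Lz)"
  have nE: "norm E = exp (\<alpha> * ln (norm z))" by (simp add: E_def ReLz)
  have nEp: "norm E > 0" using nE by simp
  define e1 where "e1 = exp (\<i> * complex_of_real ((\<alpha> - 1) * pi)) * (s/4) / E"
  have ne1: "norm e1 = norm s / exp (\<alpha> * ln (norm z)) / 4"
    by (simp add: e1_def norm_divide norm_mult nE)
  have "norm e1 \<le> (\<alpha> / 80) / 4" unfolding ne1 by (rule divide_right_mono[OF kap]) simp
  then have ne1b: "norm e1 \<le> \<alpha> / 320" by simp
  have ne1c: "norm e1 < 1/2" using ne1b a by simp
  have e1ne: "1 + e1 \<noteq> 0"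
  proof
    assume "1 + e1 = 0" then have "e1 = -1" by (simp add: add_eq_0_iff)
    then show False using ne1c by simp
  qed
  define D where "D = Ln (1 + e1)"
  have nD: "norm D \<le> \<alpha> / 160" using norm_Ln_le[OF ne1c] ne1b by (simp add: D_def)
  have ImD: "\<bar>Im D\<bar> \<le> \<alpha> / 160" using nD abs_Im_le_cmod order_trans by blast
  have eD: "exp D = 1 + e1" using e1ne by (simp add: D_def)
  have pz: "pow1 z \<alpha> = E" using imz by (simp add: pow1_def log1_upper E_def Lz_def)
  have X: "pow1 z \<alpha> + exp (\<i> * complex_of_real ((\<alpha> - 1) * pi)) * (s/4)
           = exp (complex_of_real \<alpha> * Lz + D)"
  proof -
    have "exp (\<i> * complex_of_real ((\<alpha> - 1) * pi)) * (s/4) = E * e1"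
      using nEp by (auto simp: e1_def)
    then show ?thesis by (simp add: pz exp_add eD E_def algebra_simps)
  qed
  have ImX: "Im (complex_of_real \<alpha> * Lz + D) = \<alpha> * K + Im D" by (simp add: K_def)
  have "\<alpha> * (pi/4) < \<alpha> * K" "\<alpha> * K < \<alpha> * (3*pi/4)" using K a by auto
  moreover have "\<alpha> * (3*pi/4) \<le> 2 * (3*pi/4)" using a by (intro mult_right_mono) auto
  moreover have "\<alpha> / 160 < \<alpha> * (pi/4)"
  proof -
    have "1/160 < pi/4" using pi_gt3 by simp
    then have "\<alpha> * (1/160) < \<alpha> * (pi/4)" using a by (intro mult_strict_left_mono) auto
    then show ?thesis by simp
  qed
  ultimately have g1: "0 \<le> Im (complex_of_real \<alpha> * Lz + D)" "Im (complex_of_real \<alpha> * Lz + D) < 2 * pi"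
    using ImD a pi_gt3 unfolding ImX by linarith+
  have lX: "log1 (pow1 z \<alpha> + exp (\<i> * complex_of_real ((\<alpha> - 1) * pi)) * (s/4))
     = complex_of_real \<alpha> * Lz + D"
    unfolding X by (rule log1_eq[OF refl g1])
  define \<delta> where "\<delta> = D / complex_of_real \<alpha>"
  have nd: "norm \<delta> \<le> 1/160" using nD a by (simp add: \<delta>_def norm_divide divide_simps)
  have Imd: "\<bar>Im \<delta>\<bar> \<le> 1/160" using nd abs_Im_le_cmod order_trans by blast
  have F: "Fstable \<alpha> (s/4) z = z * exp \<delta>"
  proof -
    have c: "complex_of_real (1/\<alpha>) * (complex_of_real \<alpha> * Lz + D) = Lz + \<delta>"
      using a by (simp add: \<delta>_def field_simps)
    have "Fstable \<alpha> (s/4) z = exp (complex_of_real (1/\<alpha>) * log1 (pow1 z \<alpha> + exp (\<i> * complex_of_real ((\<alpha> - 1) * pi)) * (s/4)))"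
      unfolding Fstable_def by (rule pow1_def)
    also have "\<dots> = exp (Lz + \<delta>)" unfolding lX by (simp only: c)
    also have "\<dots> = z * exp \<delta>" by (simp add: exp_add eLz)
    finally show ?thesis .
  qed
  show F0: "Fstable \<alpha> (s/4) z \<noteq> 0" using F z0 by simp
  define w where "w = z^2 / Fstable \<alpha> (s/4) z"
  have w: "w = z * exp (- \<delta>)" using z0 by (simp add: w_def F exp_minus power2_eq_square field_simps)
  define \<rho> where "\<rho> = exp (- \<delta>) - 1"
  have nr: "norm \<rho> \<le> 3/320"
    using norm_exp_m1[of "-\<delta>"] nd by (simp add: \<rho>_def)
  have nzb: "norm z \<le> 4/3 * Im z" using cmod_le[of z] zc by simp
  have zr: "norm (z * \<rho>) \<le> Im z / 80"
  proof -
    have "norm (z * \<rho>) = norm z * norm \<rho>" by (simp add: norm_mult)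
    also have "\<dots> \<le> (4/3 * Im z) * (3/320)" using nzb nr imz by (intro mult_mono) auto
    finally show ?thesis by simp
  qed
  have w2: "w = z + z * \<rho>" by (simp add: w \<rho>_def algebra_simps)
  have i1: "\<bar>Im (z * \<rho>)\<bar> \<le> Im z / 80" using abs_Im_le_cmod zr order_trans by blast
  have r1: "\<bar>Re (z * \<rho>)\<bar> \<le> Im z / 80" using abs_Re_le_cmod zr order_trans by blast
  have imwe: "Im w = Im z + Im (z * \<rho>)" by (simp only: w2 plus_complex.sel)
  have "Im (z * \<rho>) \<le> Im z / 80 \<and> - Im (z * \<rho>) \<le> Im z / 80" using i1 abs_le_iff by blast
  then have "- (Im z / 80) \<le> Im (z * \<rho>)" by linarith
  then have imw: "Im w \<ge> Im z * (79/80)" using imwe by linarith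
  show "Im (z^2 / Fstable \<alpha> (s/4) z) \<ge> Im z * (79/80)" using imw by (simp add: w_def)
  have rwe: "Re w = Re z + Re (z * \<rho>)" by (simp only: w2 plus_complex.sel)
  have "\<bar>Re w\<bar> \<le> \<bar>Re z\<bar> + \<bar>Re (z * \<rho>)\<bar>" unfolding rwe by (rule abs_triangle_ineq)
  then have "\<bar>Re w\<bar> \<le> \<bar>Re z\<bar> + Im z / 80" using r1 by linarith
  then show "Im (z^2 / Fstable \<alpha> (s/4) z) > \<bar>Re (z^2 / Fstable \<alpha> (s/4) z)\<bar>"
    using imw zc imz unfolding w_def by linarith
  have w0: "w \<noteq> 0" using w z0 by simp
  have mw: "- 1 / w = exp (\<i> * complex_of_real pi - Lz + \<delta>)"
    using z0 by (simp add: w exp_add exp_diff eLz exp_minus field_simps)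
  have Imm: "Im (\<i> * complex_of_real pi - Lz + \<delta>) = pi - K + Im \<delta>" by (simp add: K_def)
  have Imd2: "Im \<delta> \<le> 1/160 \<and> - Im \<delta> \<le> 1/160" using Imd abs_le_iff by blast
  have g2: "0 \<le> Im (\<i> * complex_of_real pi - Lz + \<delta>)" "Im (\<i> * complex_of_real pi - Lz + \<delta>) < 2 * pi"
    unfolding Imm using K Imd2 pi_gt3 by linarith+
  have lm: "log1 (- 1 / w) = \<i> * complex_of_real pi - Lz + \<delta>"
    unfolding mw by (rule log1_eq[OF refl g2])
  define q where "q = exp (complex_of_real \<alpha> * (\<i> * complex_of_real pi - Lz))"
  have pw: "pow1 (- 1 / w) \<alpha> = q * (1 + e1)"
  proof -
    have "complex_of_real \<alpha> * (\<i> * complex_of_real pi - Lz + \<delta>)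
          = complex_of_real \<alpha> * (\<i> * complex_of_real pi - Lz) + D"
      using a by (simp add: \<delta>_def field_simps)
    then show ?thesis unfolding pow1_def lm by (simp add: q_def exp_add eD)
  qed
  have qe: "q * e1 = - s * q^2 / 4"
  proof -
    have eq: "complex_of_real \<alpha> * (\<i> * complex_of_real pi - Lz) + \<i> * complex_of_real ((\<alpha> - 1) * pi)
              - complex_of_real \<alpha> * Lz
           = (complex_of_real \<alpha> * (\<i> * complex_of_real pi - Lz) + complex_of_real \<alpha> * (\<i> * complex_of_real pi - Lz)) - \<i> * complex_of_real pi"
      by (simp add: algebra_simps)
    have "q * exp (\<i> * complex_of_real ((\<alpha> - 1) * pi)) / E = q * q * (-1)"
    proof -
      have "q * exp (\<i> * complex_of_real ((\<alpha> - 1) * pi)) / E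
         = exp (complex_of_real \<alpha> * (\<i> * complex_of_real pi - Lz) + \<i> * complex_of_real ((\<alpha> - 1) * pi)
              - complex_of_real \<alpha> * Lz)"
        by (simp add: q_def E_def exp_add exp_diff)
      also have "\<dots> = q * q * (-1)"
        by (subst eq, simp only: exp_add exp_diff q_def exp_pi_i') simp
      finally show ?thesis .
    qed
    then have h: "q * exp (\<i> * complex_of_real ((\<alpha> - 1) * pi)) / E = - (q * q)" by simp
    have E0: "E \<noteq> 0" using nEp by auto
    have "q * e1 = (q * exp (\<i> * complex_of_real ((\<alpha> - 1) * pi)) / E) * (s / 4)"
      using E0 by (simp add: e1_def mult_ac)
    also have "\<dots> = - (q * q) * (s / 4)" by (simp only: h)
    finally show ?thesis by (simp add: power2_eq_square)
  qed
  define r where "r = 1 - s * q / 2"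
  have nq: "norm q = 1 / exp (\<alpha> * ln (norm z))"
    by (simp add: q_def ReLz exp_minus divide_simps)
  have nsq: "norm (s * q) \<le> 1/40"
  proof -
    have "norm (s * q) = norm s / exp (\<alpha> * ln (norm z))" by (simp add: norm_mult nq)
    then show ?thesis using kap a by linarith
  qed
  have Rer: "Re r > 0"
  proof -
    have "\<bar>Re (s * q / 2)\<bar> \<le> norm (s * q / 2)" by (rule abs_Re_le_cmod)
    also have "\<dots> \<le> 1/80" using nsq by (simp add: norm_divide)
    finally have "Re (s * q / 2) \<le> 1/80 \<and> - Re (s * q / 2) \<le> 1/80" using abs_le_iff by blast
    moreover have "Re r = 1 - Re (s * q / 2)" by (simp only: r_def minus_complex.sel one_complex.sel)
    ultimately show ?thesis by linarith
  qed
  have r0: "r \<noteq> 0" using Rer by auto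
  have y: "1 - s * pow1 (- 1 / w) \<alpha> = r^2"
  proof -
    have "1 - s * pow1 (- 1 / w) \<alpha> = 1 - s * q - s * (q * e1)" unfolding pw by (simp add: algebra_simps)
    also have "\<dots> = 1 - s * q - s * (- s * q^2 / 4)" by (simp only: qe)
    also have "\<dots> = r^2" by (simp add: r_def power2_eq_square field_simps)
    finally show ?thesis .
  qed
  have r20: "r^2 \<noteq> 0" using r0 by simp
  have sq: "ppow (r^2) (1/2) = r"
    by (rule sq_root_eq[OF sqrt_branch(1)[OF r20] sqrt_branch(2)[OF r20] Rer])
  have A: "(1 - ppow (1 - s * pow1 (- 1 / w) \<alpha>) (1 / 2)) / s = q / 2"
    unfolding y sq using s0 by (simp add: r_def)
  have q2: "q / 2 = exp (complex_of_real \<alpha> * (\<i> * complex_of_real pi - Lz) - complex_of_real (ln 2))"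
    by (simp add: q_def exp_diff exp_of_real)
  have Imq: "Im (complex_of_real \<alpha> * (\<i> * complex_of_real pi - Lz) - complex_of_real (ln 2)) = \<alpha> * (pi - K)"
    by (simp add: K_def)
  have "\<alpha> * (pi - K) > 0" using a K by simp
  moreover have "\<alpha> * (pi - K) < 2 * pi"
  proof -
    have "\<alpha> * (pi - K) \<le> 2 * (pi - K)" using a K by (intro mult_right_mono) auto
    moreover have "2 * (pi - K) < 2 * pi" using K pi_gt3 by (simp add: algebra_simps)
    ultimately show ?thesis by (rule order_le_less_trans)
  qed
  ultimately have g4: "0 \<le> Im (complex_of_real \<alpha> * (\<i> * complex_of_real pi - Lz) - complex_of_real (ln 2))"
     "Im (complex_of_real \<alpha> * (\<i> * complex_of_real pi - Lz) - complex_of_real (ln 2)) < 2 * pi"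
    unfolding Imq by linarith+
  have lq: "log1 (q/2) = complex_of_real \<alpha> * (\<i> * complex_of_real pi - Lz) - complex_of_real (ln 2)"
    unfolding q2 by (rule log1_eq[OF refl g4])
  have c: "complex_of_real (1/\<alpha>) * (complex_of_real \<alpha> * (\<i> * complex_of_real pi - Lz) - complex_of_real (ln 2))
     = (\<i> * complex_of_real pi - Lz) - complex_of_real (ln 2 / \<alpha>)"
    using a by (simp add: field_simps)
  have p2: "complex_of_real (2 powr (1/\<alpha>)) = exp (complex_of_real (ln 2 / \<alpha>))"
  proof -
    have "2 powr (1/\<alpha>) = exp (ln 2 / \<alpha>)" by (simp add: powr_def)
    then show ?thesis by (simp only: exp_of_real)
  qed
  have "Gasr \<alpha> s 2 w = - complex_of_real (2 powr (1/\<alpha>)) * pow1 ((1 - ppow (1 - s * pow1 (- 1 / w) \<alpha>) (1 / 2)) / s) (1/\<alpha>)"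
    by (simp only: Gasr_def)
  also have "\<dots> = - complex_of_real (2 powr (1/\<alpha>)) * exp (complex_of_real (1/\<alpha>) * log1 (q / 2))"
    by (simp only: A, simp only: pow1_def)
  also have "\<dots> = - exp (complex_of_real (ln 2 / \<alpha>)) * exp ((\<i> * complex_of_real pi - Lz) - complex_of_real (ln 2 / \<alpha>))"
    by (simp only: lq c p2)
  also have "\<dots> = - exp (\<i> * complex_of_real pi - Lz)" by (simp add: exp_diff)
  also have "\<dots> = 1 / z" by (simp add: exp_diff eLz)
  finally show "Gasr \<alpha> s 2 (z^2 / Fstable \<alpha> (s/4) z) = 1 / z" by (simp add: w_def)
qed


lemma repr:
  fixes \<alpha> :: real and s w :: complex
  assumes a: "0 < \<alpha>" "\<alpha> \<le> 2" and s0: "s \<noteq> 0"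
    and wc: "Im w > \<bar>Re w\<bar>"
    and kap: "norm s / exp (\<alpha> * ln (norm w)) \<le> \<alpha> / 80"
  shows "\<exists>LA. Gasr \<alpha> s 2 w = - complex_of_real (2 powr (1/\<alpha>)) * exp (complex_of_real (1/\<alpha>) * LA)
     \<and> exp LA = (1 - ppow (1 - s * exp (complex_of_real \<alpha> * (\<i> * complex_of_real pi - Ln w))) (1/2)) / s
     \<and> 1 - s * exp (complex_of_real \<alpha> * (\<i> * complex_of_real pi - Ln w)) \<noteq> 0
     \<and> pi/4 - 1/40 < Im (complex_of_real (1/\<alpha>) * LA) \<and> Im (complex_of_real (1/\<alpha>) * LA) < 3*pi/4 + 1/40"
proof -
  have imw: "Im w > 0" using wc by linarith
  have w0: "w \<noteq> 0" using imw by auto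
  define Lw where "Lw = Ln w"
  define K where "K = Im Lw"
  have K: "pi/4 < K" "K < 3*pi/4" using cone_angle[of w] wc by (auto simp: K_def Lw_def)
  have eLw: "exp Lw = w" using w0 by (simp add: Lw_def)
  have ReLw: "Re Lw = ln (norm w)" using w0 by (simp add: Lw_def)
  have mw: "- 1 / w = exp (\<i> * complex_of_real pi - Lw)"
    by (simp add: exp_diff eLw)
  have Imm: "Im (\<i> * complex_of_real pi - Lw) = pi - K" by (simp add: K_def)
  have g5: "0 \<le> Im (\<i> * complex_of_real pi - Lw)" "Im (\<i> * complex_of_real pi - Lw) < 2 * pi"
    unfolding Imm using K by linarith+
  have lm: "log1 (- 1 / w) = \<i> * complex_of_real pi - Lw"
    unfolding mw by (rule log1_eq[OF refl g5])
  define p where "p = exp (complex_of_real \<alpha> * (\<i> * complex_of_real pi - Lw))"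
  have pw: "pow1 (- 1 / w) \<alpha> = p" unfolding pow1_def lm by (simp add: p_def)
  have np: "norm p = 1 / exp (\<alpha> * ln (norm w))"
    by (simp add: p_def ReLw exp_minus divide_simps)
  have nsp: "norm (s * p) \<le> \<alpha> / 80"
  proof -
    have "norm (s * p) = norm s / exp (\<alpha> * ln (norm w))" by (simp add: norm_mult np)
    then show ?thesis using kap by linarith
  qed
  have nsp2: "norm (s * p) \<le> 1/40" using nsp a by linarith
  define y where "y = 1 - s * p"
  have y0: "y \<noteq> 0"
  proof
    assume "y = 0" then have "s * p = 1" by (simp add: y_def)
    then have "norm (s * p) = 1" by simp
    then show False using nsp2 by linarith
  qed
  define R where "R = ppow y (1/2)"
  have R2: "R^2 = y" and ReR: "Re R \<ge> 0" using sqrt_branch[OF y0] by (auto simp: R_def)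
  have ReR1: "Re (1 + R) \<ge> 1" using ReR by simp
  have nR1: "norm (1 + R) \<ge> 1" using ReR1 complex_Re_le_cmod order_trans by blast
  have R10: "1 + R \<noteq> 0" using nR1 by auto
  have prod: "(1 - R) * (1 + R) = s * p" using R2 by (simp add: y_def power2_eq_square algebra_simps)
  have n1R: "norm (1 - R) \<le> norm (s * p)"
  proof -
    have "norm (1 - R) \<le> norm (1 - R) * norm (1 + R)" using nR1 by (simp add: mult_le_cancel_left1)
    also have "\<dots> = norm (s * p)" by (simp add: prod[symmetric] norm_mult)
    finally show ?thesis .
  qed
  define e2 where "e2 = (1 - R) / (1 + R)"
  have ne2: "norm e2 \<le> \<alpha> / 80"
  proof -
    have "norm e2 = norm (1 - R) / norm (1 + R)" by (simp add: e2_def norm_divide)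
    also have "\<dots> \<le> norm (1 - R)" using nR1 by (simp add: divide_le_eq mult_le_cancel_left1)
    finally show ?thesis using n1R nsp by linarith
  qed
  have ne2c: "norm e2 < 1/2" using ne2 a by simp
  have e2ne: "1 + e2 \<noteq> 0"
  proof
    assume "1 + e2 = 0" then have "e2 = -1" by (simp add: add_eq_0_iff)
    then show False using ne2c by simp
  qed
  define E where "E = Ln (1 + e2)"
  have nE: "norm E \<le> \<alpha> / 40" using norm_Ln_le[OF ne2c] ne2 by (simp add: E_def)
  have ImE: "\<bar>Im E\<bar> \<le> \<alpha> / 40" using nE abs_Im_le_cmod order_trans by blast
  have eE: "exp E = 1 + e2" using e2ne by (simp add: E_def)
  define A where "A = (1 - R) / s"
  have Aeq: "A = (p / 2) * (1 + e2)"
  proof -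
    have "1 + e2 = 2 / (1 + R)" using R10 by (simp add: e2_def field_simps)
    moreover have "A = p / (1 + R)" using R10 s0 prod by (simp add: A_def field_simps)
    ultimately show ?thesis by simp
  qed
  define LA where "LA = complex_of_real \<alpha> * (\<i> * complex_of_real pi - Lw) - complex_of_real (ln 2) + E"
  have eLA: "exp LA = A" by (simp add: LA_def Aeq exp_add exp_diff eE p_def exp_of_real)
  have ImLA: "Im LA = \<alpha> * (pi - K) + Im E" by (simp add: LA_def K_def)
  have b1: "\<alpha> * (pi/4) < \<alpha> * (pi - K)" "\<alpha> * (pi - K) < \<alpha> * (3*pi/4)" using K a by auto
  have b2: "\<alpha> * (3*pi/4) \<le> 2 * (3*pi/4)" using a by (intro mult_right_mono) auto
  have b3: "\<alpha> / 40 < \<alpha> * (pi/4)"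
  proof -
    have "1/40 < pi/4" using pi_gt3 by simp
    then have "\<alpha> * (1/40) < \<alpha> * (pi/4)" using a by (intro mult_strict_left_mono) auto
    then show ?thesis by simp
  qed
  have ImE2: "Im E \<le> \<alpha> / 40 \<and> - Im E \<le> \<alpha> / 40" using ImE abs_le_iff by blast
  have g3: "0 \<le> Im LA" "Im LA < 2 * pi"
    unfolding ImLA using b1 b2 b3 ImE2 a pi_gt3 by linarith+
  have lA: "log1 A = LA" using log1_eq[OF eLA g3] .
  have G: "Gasr \<alpha> s 2 w = - complex_of_real (2 powr (1/\<alpha>)) * exp (complex_of_real (1/\<alpha>) * LA)"
  proof -
    have "Gasr \<alpha> s 2 w = - complex_of_real (2 powr (1/\<alpha>)) * pow1 ((1 - ppow (1 - s * pow1 (- 1 / w) \<alpha>) (1 / 2)) / s) (1/\<alpha>)"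
      by (simp only: Gasr_def)
    also have "\<dots> = - complex_of_real (2 powr (1/\<alpha>)) * pow1 A (1/\<alpha>)"
      by (simp only: pw A_def R_def y_def)
    also have "\<dots> = - complex_of_real (2 powr (1/\<alpha>)) * exp (complex_of_real (1/\<alpha>) * LA)"
      by (simp only: pow1_def lA)
    finally show ?thesis .
  qed
  have ImC: "Im (complex_of_real (1/\<alpha>) * LA) = (pi - K) + Im E / \<alpha>"
    using a by (simp add: ImLA field_simps)
  have "\<bar>Im E / \<alpha>\<bar> \<le> 1/40" using ImE a by (simp add: abs_divide divide_le_eq)
  then have "pi/4 - 1/40 < Im (complex_of_real (1/\<alpha>) * LA) \<and> Im (complex_of_real (1/\<alpha>) * LA) < 3*pi/4 + 1/40"
    unfolding ImC using K by linarith
  then show ?thesis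
    using G eLA y0 by (intro exI[of _ LA]) (simp add: A_def R_def y_def p_def Lw_def)
qed

lemma inj:
  fixes \<alpha> :: real and s w1 w2 :: complex
  assumes a: "0 < \<alpha>" "\<alpha> \<le> 2" and s0: "s \<noteq> 0"
    and wc1: "Im w1 > \<bar>Re w1\<bar>"
    and kap1: "norm s / exp (\<alpha> * ln (norm w1)) \<le> \<alpha> / 80"
    and wc2: "Im w2 > \<bar>Re w2\<bar>"
    and kap2: "norm s / exp (\<alpha> * ln (norm w2)) \<le> \<alpha> / 80"
    and eq: "Gasr \<alpha> s 2 w1 = Gasr \<alpha> s 2 w2"
  shows "w1 = w2"
proof -
  obtain L1 where L1: "Gasr \<alpha> s 2 w1 = - complex_of_real (2 powr (1/\<alpha>)) * exp (complex_of_real (1/\<alpha>) * L1)"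
     "exp L1 = (1 - ppow (1 - s * exp (complex_of_real \<alpha> * (\<i> * complex_of_real pi - Ln w1))) (1/2)) / s"
     "1 - s * exp (complex_of_real \<alpha> * (\<i> * complex_of_real pi - Ln w1)) \<noteq> 0"
     "pi/4 - 1/40 < Im (complex_of_real (1/\<alpha>) * L1)" "Im (complex_of_real (1/\<alpha>) * L1) < 3*pi/4 + 1/40"
    using repr[OF a s0 wc1 kap1] by blast
  obtain L2 where L2: "Gasr \<alpha> s 2 w2 = - complex_of_real (2 powr (1/\<alpha>)) * exp (complex_of_real (1/\<alpha>) * L2)"
     "exp L2 = (1 - ppow (1 - s * exp (complex_of_real \<alpha> * (\<i> * complex_of_real pi - Ln w2))) (1/2)) / s"
     "1 - s * exp (complex_of_real \<alpha> * (\<i> * complex_of_real pi - Ln w2)) \<noteq> 0"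
     "pi/4 - 1/40 < Im (complex_of_real (1/\<alpha>) * L2)" "Im (complex_of_real (1/\<alpha>) * L2) < 3*pi/4 + 1/40"
    using repr[OF a s0 wc2 kap2] by blast
  define x1 where "x1 = complex_of_real (1/\<alpha>) * L1"
  define x2 where "x2 = complex_of_real (1/\<alpha>) * L2"
  have c0: "complex_of_real (2 powr (1/\<alpha>)) \<noteq> 0" by simp
  have "exp x1 = exp x2" using eq L1(1) L2(1) c0 by (simp add: x1_def x2_def)
  then obtain n :: int where n: "x1 = x2 + complex_of_real (of_int (2 * n) * pi) * \<i>"
    unfolding exp_eq by auto
  have "Im x1 = Im x2 + of_int (2 * n) * pi" using n by simp
  then have "\<bar>of_int (2 * n) * pi\<bar> < 2 * pi" using L1(4,5) L2(4,5) pi_gt3 unfolding x1_def x2_def by linarith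
  then have "\<bar>of_int n\<bar> < (1::real)" by (simp add: abs_mult)
  then have "n = 0" by linarith
  then have "x1 = x2" using n by simp
  then have "L1 = L2" using a by (simp add: x1_def x2_def)
  then have "ppow (1 - s * exp (complex_of_real \<alpha> * (\<i> * complex_of_real pi - Ln w1))) (1/2)
           = ppow (1 - s * exp (complex_of_real \<alpha> * (\<i> * complex_of_real pi - Ln w2))) (1/2)"
    using L1(2) L2(2) s0 by (simp add: divide_cancel_right)
  then have "(ppow (1 - s * exp (complex_of_real \<alpha> * (\<i> * complex_of_real pi - Ln w1))) (1/2))^2
           = (ppow (1 - s * exp (complex_of_real \<alpha> * (\<i> * complex_of_real pi - Ln w2))) (1/2))^2" by simp
  then have "1 - s * exp (complex_of_real \<alpha> * (\<i> * complex_of_real pi - Ln w1))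
           = 1 - s * exp (complex_of_real \<alpha> * (\<i> * complex_of_real pi - Ln w2))"
    using sqrt_branch(1)[OF L1(3)] sqrt_branch(1)[OF L2(3)] by simp
  then have "exp (complex_of_real \<alpha> * (\<i> * complex_of_real pi - Ln w1))
           = exp (complex_of_real \<alpha> * (\<i> * complex_of_real pi - Ln w2))" using s0 by simp
  then obtain m :: int where m: "complex_of_real \<alpha> * (\<i> * complex_of_real pi - Ln w1)
        = complex_of_real \<alpha> * (\<i> * complex_of_real pi - Ln w2) + complex_of_real (of_int (2 * m) * pi) * \<i>"
    unfolding exp_eq by auto
  have K1: "pi/4 < Im (Ln w1)" "Im (Ln w1) < 3*pi/4" using cone_angle[OF wc1] by auto
  have K2: "pi/4 < Im (Ln w2)" "Im (Ln w2) < 3*pi/4" using cone_angle[OF wc2] by auto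
  have mi: "of_int (2 * m) * pi = \<alpha> * (Im (Ln w2) - Im (Ln w1))"
    using arg_cong[OF m, of Im] by (simp add: algebra_simps)
  define d where "d = Im (Ln w2) - Im (Ln w1)"
  have d1: "\<bar>d\<bar> < pi/2" using K1 K2 unfolding d_def by linarith
  have d2: "\<alpha> * \<bar>d\<bar> \<le> 2 * \<bar>d\<bar>" using a by (intro mult_right_mono) auto
  have d3: "\<bar>\<alpha> * d\<bar> = \<alpha> * \<bar>d\<bar>" using a by (simp add: abs_mult)
  have d4: "\<bar>\<alpha> * d\<bar> < pi" using d1 d2 d3 by linarith
  have "\<bar>of_int (2 * m) * pi\<bar> < 2 * pi" using mi d4 pi_gt3 unfolding d_def by linarith
  then have "\<bar>of_int m\<bar> < (1::real)" by (simp add: abs_mult)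
  then have "m = 0" by linarith
  then have "Ln w1 = Ln w2" using m a by simp
  then show "w1 = w2" using wc1 wc2
    by (metis exp_Ln abs_ge_zero less_le_not_le not_less_iff_gr_or_eq zero_complex.sel(2) order.strict_trans2)
qed



theorem theorem4p1:
  fixes \<alpha> :: real and s :: complex and \<mu> a :: "real measure"
  assumes adm: "admissible \<alpha> s"
    and mu_prob: "prob_space \<mu>" and mu_sets: "sets \<mu> = sets borel"
    and mu_G: "\<And>z. Im z > 0 \<Longrightarrow> cauchy \<mu> z = Gasr \<alpha> s 2 z"
    and a_prob: "prob_space a" and a_sets: "sets a = sets borel"
    and a_F: "\<And>z. Im z > 0 \<Longrightarrow> Ftr a z = Fstable \<alpha> (s / 4) z"
  shows "\<exists>\<eta> M \<eta>' M'. \<eta> > 0 \<and> M > 0 \<and> \<eta>' > 0 \<and> M' > 0 \<and>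
           inj_on (Ftr \<mu>) (cone \<eta>' M') \<and>
           (\<forall>z \<in> cone \<eta> M. z\<^sup>2 * cauchy a z \<in> cone \<eta>' M' \<and>
                             Ftr \<mu> (z\<^sup>2 * cauchy a z) = z)"
proof -
  have s0: "s \<noteq> 0" and a: "0 < \<alpha>" "\<alpha> \<le> 2" using adm by (auto simp: admissible_def)
  define B where "B = 80 * (norm s + 1) / \<alpha> + 1"
  have "80 * (norm s + 1) > 0" by (smt (verit) norm_ge_zero)
  then have B1: "80 * (norm s + 1) / \<alpha> > 0" using a by (intro divide_pos_pos)
  have B: "B > 0" "B \<ge> 80 * (norm s + 1) / \<alpha>" using B1 by (auto simp: B_def)
  define M where "M = 2 * B powr (1/\<alpha>)"
  have M: "M > 0" using B by (simp add: M_def)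
  have key: "norm s / exp (\<alpha> * ln (norm v)) \<le> \<alpha> / 80" if v: "norm v > M/2" for v :: complex
  proof -
    have hv: "norm v > B powr (1/\<alpha>)" using v by (simp add: M_def)
    have pos: "B powr (1/\<alpha>) > 0" using B by simp
    have "(B powr (1/\<alpha>)) powr \<alpha> < norm v powr \<alpha>" using hv pos a by (intro powr_less_mono2) auto
    then have b: "B < norm v powr \<alpha>" using B a by (simp add: powr_powr)
    have nv: "norm v > 0" using hv pos by linarith
    have "norm v powr \<alpha> = exp (\<alpha> * ln (norm v))" using nv by (simp add: powr_def)
    then have X: "B < exp (\<alpha> * ln (norm v))" using b by simp
    have "norm s / exp (\<alpha> * ln (norm v)) \<le> norm s / (80 * (norm s + 1) / \<alpha>)"
      using X B B1 by (intro frac_le) auto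
    also have "\<dots> = \<alpha> * (norm s / (norm s + 1)) / 80" by (simp add: field_simps)
    also have "\<dots> \<le> \<alpha> * 1 / 80"
    proof -
      have p1: "0 < norm s + 1" by (smt (verit) norm_ge_zero)
      then have "norm s / (norm s + 1) \<le> 1" by (simp add: divide_le_eq_1)
      then show ?thesis using a by (intro divide_right_mono mult_left_mono) auto
    qed
    finally show ?thesis by simp
  qed
  show ?thesis
  proof (rule exI[of _ 3], rule exI[of _ M], rule exI[of _ 1], rule exI[of _ "M/2"], intro conjI)
    show "(3::real) > 0" "M > 0" "(1::real) > 0" "M/2 > 0" using M by auto
    show "inj_on (Ftr \<mu>) (cone 1 (M/2))"
    proof (rule inj_onI)
      fix w1 w2 assume w1: "w1 \<in> cone 1 (M/2)" and w2: "w2 \<in> cone 1 (M/2)"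
        and eq: "Ftr \<mu> w1 = Ftr \<mu> w2"
      have c1: "Im w1 > \<bar>Re w1\<bar>" "Im w1 > M/2" using w1 by (auto simp: cone_def)
      have c2: "Im w2 > \<bar>Re w2\<bar>" "Im w2 > M/2" using w2 by (auto simp: cone_def)
      have n1: "norm w1 > M/2" using c1(2) abs_Im_le_cmod[of w1] by linarith
      have n2: "norm w2 > M/2" using c2(2) abs_Im_le_cmod[of w2] by linarith
      have "cauchy \<mu> w1 = cauchy \<mu> w2" using eq by (simp add: Ftr_def)
      moreover have "Im w1 > 0" "Im w2 > 0" using c1 c2 by linarith+
      ultimately have "Gasr \<alpha> s 2 w1 = Gasr \<alpha> s 2 w2" using mu_G by simp
      then show "w1 = w2" using inj[OF a s0 c1(1) key[OF n1] c2(1) key[OF n2]] by blast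
    qed
    show "\<forall>z \<in> cone 3 M. z\<^sup>2 * cauchy a z \<in> cone 1 (M/2) \<and> Ftr \<mu> (z\<^sup>2 * cauchy a z) = z"
    proof
      fix z assume z: "z \<in> cone 3 M"
      have zc: "Im z > 3 * \<bar>Re z\<bar>" "Im z > M" using z by (auto simp: cone_def)
      have nz: "norm z > M/2" using zc(2) abs_Im_le_cmod[of z] M by linarith
      have imz: "Im z > 0" using zc M by linarith
      note f = fwd[OF a s0 zc(1) key[OF nz]]
      have "1 / cauchy a z = Fstable \<alpha> (s/4) z" using a_F[OF imz] by (simp add: Ftr_def)
      then have ca: "cauchy a z = 1 / Fstable \<alpha> (s/4) z"
        by (metis inverse_inverse_eq inverse_eq_divide)
      have wz: "z\<^sup>2 * cauchy a z = z\<^sup>2 / Fstable \<alpha> (s/4) z" by (simp add: ca)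
      have imw: "Im (z\<^sup>2 / Fstable \<alpha> (s/4) z) > M/2" using f(3) zc M by linarith
      show "z\<^sup>2 * cauchy a z \<in> cone 1 (M/2) \<and> Ftr \<mu> (z\<^sup>2 * cauchy a z) = z"
      proof
        show "z\<^sup>2 * cauchy a z \<in> cone 1 (M/2)" using f(2) imw by (simp add: wz cone_def)
        have "Im (z\<^sup>2 / Fstable \<alpha> (s/4) z) > 0" using imw M by linarith
        then show "Ftr \<mu> (z\<^sup>2 * cauchy a z) = z" using mu_G f(4) by (simp add: wz Ftr_def)
      qed
    qed
  qed
qed


end
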